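(* Let $C_n(a,b)$ be a connected $2$-regular circulant digraph, let $l\ge1$, $0\le k\le l$ with $la+k(b-a)=\omega n$ for an integer $\omega$, and let $w\in\mathbb{W}_2(l,k)$ with $w=x^r$ where $r$ is the repetition number of $w$. Then for any vertex $v$, the periodic orbit $p=\varphi(w,v)$ is primitive if and only if $\gcd(r,\omega)=1$. More generally, if $p=q^t$ for some periodic orbit $q$ and positive integer $t$, then $q$ is primitive if and only if $t=\gcd(r,\omega)$.
   Context: Let $n\ge 2$ and $0<a<b<n$ be integers with $\gcd(n,a,b)=1$. $C_n(a,b)$ has vertex set $\mathbb{Z}_n$ and directed bonds $(v,v+a)$, $(v,v+b)$ (addition mod $n$), with step sizes $a$, $b$. A path of length $l$ is a sequence of bonds $(e_1,\dots,e_l)$ with the terminus of $e_j$ equal to the origin of $e_{j+1}$; its $b$-count is the number of bonds of step size $b$; its step sequence is the sequence of step sizes; a circuit is a path whose last terminus equals its first origin. A periodic orbit is an equivalence class of circuits under cyclic rotation $(e_1,\dots,e_l)\mapsto(e_2,\dots,e_l,e_1)$. For a circuit $c$, $c^t$ is the concatenation of $t$ copies, and for an orbit $q=[c]$, $q^t=[c^t]$. An orbit is primitive if it is not $[c_0^r]$ for a circuit $c_0$ and $r>1$. $\mathbb{W}_2(l,k)$ is the set of words over $\{a,b\}$ of length $l$ with exactly $k$ letters $b$; the repetition number of a word $w$ is the largest $r$ with $w=x^r$ for some word $x$ (then $x$ is primitive, i.e., not a proper power). Identifying letters $a,b$ with step sizes $a,b$, $\psi(w,v)$ is the unique path starting at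 vertex $v$ with step sequence $w$; when it is a circuit, $\varphi(w,v)=[\psi(w,v)]$. *)

theory Defs
  imports Main
begin

(* Circulant digraph C_n(a,b): vertices {0..<n} (representing Z_n),
   a bond is a pair (origin, terminus). *)

type_synonym bond = "nat \<times> nat"

definition is_bond :: "nat \<Rightarrow> nat \<Rightarrow> nat \<Rightarrow> bond \<Rightarrow> bool" where
  "is_bond n a b e \<longleftrightarrow> fst e < n \<and>
     (snd e = (fst e + a) mod n \<or> snd e = (fst e + b) mod n)"

definition is_path :: "nat \<Rightarrow> nat \<Rightarrow> nat \<Rightarrow> bond list \<Rightarrow> bool" where
  "is_path n a b p \<longleftrightarrow> (\<forall>e\<in>set p. is_bond n a b e) \<and>
     (\<forall>j. Suc j < length p \<longrightarrow> snd (p ! j) = fst (p ! Suc j))"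

definition is_circuit :: "nat \<Rightarrow> nat \<Rightarrow> nat \<Rightarrow> bond list \<Rightarrow> bool" where
  "is_circuit n a b c \<longleftrightarrow> is_path n a b c \<and> c \<noteq> [] \<and> snd (last c) = fst (hd c)"

definition orbit :: "bond list \<Rightarrow> bond list set" where
  "orbit c = {rotate k c | k. True}"

definition cpow :: "bond list \<Rightarrow> nat \<Rightarrow> bond list" where
  "cpow c t = concat (replicate t c)"

definition is_orbit :: "nat \<Rightarrow> nat \<Rightarrow> nat \<Rightarrow> bond list set \<Rightarrow> bool" where
  "is_orbit n a b q \<longleftrightarrow> (\<exists>c. is_circuit n a b c \<and> q = orbit c)"

definition primitive_orbit :: "nat \<Rightarrow> nat \<Rightarrow> nat \<Rightarrow> bond list set \<Rightarrow> bool" where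
  "primitive_orbit n a b q \<longleftrightarrow>
     \<not> (\<exists>c0 r. is_circuit n a b c0 \<and> r > 1 \<and> q = orbit (cpow c0 r))"

datatype letter = LA | LB

definition W2 :: "nat \<Rightarrow> nat \<Rightarrow> letter list set" where
  "W2 l k = {w. length w = l \<and> length (filter (\<lambda>x. x = LB) w) = k}"

definition rep_num :: "letter list \<Rightarrow> nat" where
  "rep_num w = (GREATEST r. \<exists>x. w = concat (replicate r x))"

definition step_size :: "nat \<Rightarrow> nat \<Rightarrow> letter \<Rightarrow> nat" where
  "step_size a b s = (case s of LA \<Rightarrow> a | LB \<Rightarrow> b)"

fun psi :: "nat \<Rightarrow> nat \<Rightarrow> nat \<Rightarrow> letter list \<Rightarrow> nat \<Rightarrow> bond list" where
  "psi n a b [] v = []"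
| "psi n a b (s # w) v =
     (v, (v + step_size a b s) mod n) # psi n a b w ((v + step_size a b s) mod n)"

definition phi :: "nat \<Rightarrow> nat \<Rightarrow> nat \<Rightarrow> letter list \<Rightarrow> nat \<Rightarrow> bond list set" where
  "phi n a b w v = orbit (psi n a b w v)"

end

theory Submission
  imports Defs
begin

lemma rotate_inj: assumes "rotate j X = rotate j Y" shows "X = Y"
proof -
  have L: "length X = length Y" using arg_cong[OF assms, of length] by simp
  let ?m = "length X - j mod length X"
  have "rotate ?m (rotate j X) = rotate ?m (rotate j Y)" using assms by simp
  hence "rotate (?m + j) X = rotate (?m + j) Y" by (simp add: rotate_rotate)
  moreover have "(?m + j) mod length X = 0" if ne: "X \<noteq> []"
  proof -
    have "j mod length X < length X" using ne by simp
    moreover have "j = length X * (j div length X) + j mod length X" by simp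
    ultimately have "?m + j = length X * (j div length X) + length X" by linarith
    thus ?thesis by simp
  qed
  ultimately show ?thesis using L by (cases "X = []") auto
qed

lemma rotate_fix_rot: "rotate k (rotate j X) = rotate j X \<longleftrightarrow> rotate k X = X"
proof
  assume "rotate k (rotate j X) = rotate j X"
  hence "rotate j (rotate k X) = rotate j X" by (simp add: rotate_rotate add.commute)
  thus "rotate k X = X" by (rule rotate_inj)
next
  assume "rotate k X = X" thus "rotate k (rotate j X) = rotate j X"
    by (metis rotate_rotate add.commute)
qed

lemma rotate_mult_fix: "rotate k X = X \<Longrightarrow> rotate (k*m) X = X"
  by (induct m) (auto simp: rotate_rotate[symmetric] add.commute)

lemma rotate_gcd_fix: assumes "rotate k X = X" "rotate m X = X" shows "rotate (gcd k m) X = X"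
proof (cases "k = 0")
  case True thus ?thesis using assms by simp
next
  case False
  then obtain x y where e: "k * x = m * y + gcd k m" using bezout_nat by blast
  have "X = rotate (k*x) X" using rotate_mult_fix[OF assms(1)] by simp
  also have "\<dots> = rotate (gcd k m) (rotate (m*y) X)" by (simp add: e rotate_rotate add.commute)
  also have "\<dots> = rotate (gcd k m) X" using rotate_mult_fix[OF assms(2)] by simp
  finally show ?thesis by simp
qed

definition wpow :: "'a list \<Rightarrow> nat \<Rightarrow> 'a list" where "wpow c t = concat (replicate t c)"

lemma wpow_Suc: "wpow c (Suc t) = c @ wpow c t" by (simp add: wpow_def)
lemma wpow_0: "wpow c 0 = []" by (simp add: wpow_def)
lemma length_wpow: "length (wpow c t) = t * length c" by (induct t) (auto simp: wpow_def)

lemma wpow_snoc: "wpow (h#u) t @ [h] = h # wpow (u@[h]) t"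
  by (induct t) (auto simp: wpow_def)

lemma rotate1_wpow: "rotate1 (wpow c t) = wpow (rotate1 c) t"
proof (cases c)
  case Nil thus ?thesis by (simp add: wpow_def)
next
  case (Cons h u)
  show ?thesis
  proof (cases t)
    case 0 thus ?thesis by (simp add: wpow_def)
  next
    case (Suc t')
    have "rotate1 (wpow c t) = u @ wpow (h#u) t' @ [h]" using Cons Suc by (simp add: wpow_Suc)
    also have "\<dots> = wpow (u@[h]) t" using Suc by (simp add: wpow_snoc wpow_Suc)
    finally show ?thesis using Cons by simp
  qed
qed

lemma rotate_wpow: "rotate k (wpow c t) = wpow (rotate k c) t"
  by (induct k) (auto simp: rotate1_wpow)

lemma wpow_inj: assumes "t > 0" "length c = length c'" "wpow c t = wpow c' t" shows "c = c'"
proof -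
  obtain t' where tt: "t = Suc t'" using assms(1) by (cases t) auto
  have 1: "take (length c) (wpow c t) = c" unfolding tt wpow_Suc by simp
  have 2: "take (length c') (wpow c' t) = c'" unfolding tt wpow_Suc by simp
  show ?thesis using 1 2 assms(2,3) by metis
qed

lemma rotate_wpow_fix: "t > 0 \<Longrightarrow> rotate k (wpow c t) = wpow c t \<longleftrightarrow> rotate k c = c"
  using wpow_inj[of t "rotate k c" c] by (auto simp: rotate_wpow)

lemma comm_pow: "length u = d \<Longrightarrow> d > 0 \<Longrightarrow> length y = q*d \<Longrightarrow> y @ u = u @ y \<Longrightarrow> y = wpow u q"
proof (induct q arbitrary: y)
  case 0 thus ?case by (simp add: wpow_def)
next
  case (Suc q)
  have "take d y = take d (y@u)" using Suc.prems(3) by simp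
  also have "\<dots> = take d (u@y)" using Suc.prems(4) by simp
  also have "\<dots> = u" using Suc.prems(1) by simp
  finally have ty: "take d y = u" .
  define y' where "y' = drop d y"
  have yy: "y = u @ y'" using ty y'_def by (metis append_take_drop_id)
  hence "u @ y' @ u = u @ u @ y'" using Suc.prems(4) by simp
  hence "y' @ u = u @ y'" by simp
  moreover have "length y' = q * d" using Suc.prems y'_def by simp
  ultimately have "y' = wpow u q" using Suc by blast
  thus ?case using yy by (simp add: wpow_Suc)
qed

lemma rot_pow: assumes "d > 0" "d dvd length c" "rotate d c = c"
  shows "c = wpow (take d c) (length c div d)"
proof (cases "d = length c")
  case True thus ?thesis using assms(1) by (simp add: wpow_def)
next
  case False
  show ?thesis
  proof (cases "c = []")
    case True thus ?thesis by (simp add: wpow_def)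
  next
    case cn: False
  have cne: "length c > 0" using cn by simp
  then have dl: "d < length c" using assms False by (simp add: dvd_imp_le le_neq_implies_less)
  obtain q where q: "length c = d * q" using assms(2) by blast
  then obtain q' where q': "q = Suc q'" using cne by (cases q) auto
  have "c = drop d c @ take d c" using assms(3) dl by (metis rotate_drop_take mod_less)
  moreover have "c = take d c @ drop d c" by simp
  ultimately have "drop d c @ take d c = take d c @ drop d c" by simp
  moreover have "length (drop d c) = q' * d" using q q' by simp
  ultimately have "drop d c = wpow (take d c) q'"
    using comm_pow[of "take d c" d "drop d c" q'] assms dl by simp
  hence "c = take d c @ wpow (take d c) q'" by (metis append_take_drop_id)
  thus ?thesis using q q' assms by (simp add: wpow_Suc)
  qed
qed


lemma cpow_eq: "cpow c t = wpow c t" by (simp add: cpow_def wpow_def)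

lemma in_orbit_eq: "orbit c = orbit X \<Longrightarrow> \<exists>j. c = rotate j X"
proof -
  assume "orbit c = orbit X"
  moreover have "c \<in> orbit c" unfolding orbit_def by (rule CollectI, rule exI[of _ 0]) simp
  ultimately show ?thesis unfolding orbit_def by auto
qed

lemma is_path_take: "is_path n a b c \<Longrightarrow> is_path n a b (take d c)"
  unfolding is_path_def by (auto dest: in_set_takeD)

lemma prim_iff: assumes "is_circuit n a b c"
  shows "primitive_orbit n a b (orbit c) \<longleftrightarrow> (\<forall>k. 0<k \<and> k<length c \<longrightarrow> rotate k c \<noteq> c)"
proof
  assume P: "primitive_orbit n a b (orbit c)"
  show "\<forall>k. 0<k \<and> k<length c \<longrightarrow> rotate k c \<noteq> c"
  proof (intro allI impI notI)
    fix k assume k: "0<k \<and> k<length c" and rk: "rotate k c = c"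
    define d where "d = gcd k (length c)"
    have rd: "rotate d c = c" unfolding d_def by (rule rotate_gcd_fix[OF rk]) simp
    have d0: "d > 0" using k d_def by simp
    have "d \<le> k" using k unfolding d_def by (simp add: gcd_le1_nat)
    hence dl: "d < length c" using k by linarith
    have dd: "d dvd length c" using d_def by simp
    have ce: "c = wpow (take d c) (length c div d)" using rot_pow[OF d0 dd rd] .
    obtain q where qd: "length c = d * q" using dd by blast
    have qq: "length c div d = q" using qd d0 by simp
    have "q \<noteq> 0" using qd dl by auto
    moreover have "q \<noteq> 1" using qd dl by auto
    ultimately have q1: "length c div d > 1" using qq by linarith
    have cp: "is_path n a b c" and cne: "c \<noteq> []" and cl: "snd (last c) = fst (hd c)"
      using assms by (auto simp: is_circuit_def)
    have "snd (last (take d c)) = snd (c ! (d - 1))" using d0 dl cne by (simp add: last_conv_nth)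
    also have "\<dots> = fst (c ! d)" using cp d0 dl unfolding is_path_def by (metis Suc_pred')
    also have "c ! d = c ! 0" using rd dl nth_rotate[of 0 c d] cne by simp
    finally have "snd (last (take d c)) = fst (hd (take d c))" using d0 cne by (simp add: hd_conv_nth)
    hence "is_circuit n a b (take d c)" using is_path_take[OF cp] d0 cne by (auto simp: is_circuit_def)
    moreover have "cpow (take d c) (length c div d) = c" by (simp only: cpow_eq) (rule ce[symmetric])
    ultimately show False using P q1 unfolding primitive_orbit_def by force
  qed
next
  assume R: "\<forall>k. 0<k \<and> k<length c \<longrightarrow> rotate k c \<noteq> c"
  show "primitive_orbit n a b (orbit c)"
    unfolding primitive_orbit_def
  proof
    assume "\<exists>c0 r. is_circuit n a b c0 \<and> r > 1 \<and> orbit c = orbit (cpow c0 r)"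
    then obtain c0 r where c0: "is_circuit n a b c0" "r > 1" "orbit c = orbit (cpow c0 r)" by blast
    then obtain j where cj: "c = rotate j (cpow c0 r)" using in_orbit_eq by blast
    have "rotate (length c0) (cpow c0 r) = cpow c0 r" using c0 by (simp add: cpow_eq rotate_wpow)
    hence "rotate (length c0) c = c" using cj rotate_fix_rot by metis
    moreover have "length c0 > 0" using c0 by (simp add: is_circuit_def)
    moreover have "length c0 < length c" using cj c0 calculation by (simp add: cpow_eq length_wpow)
    ultimately show False using R by blast
  qed
qed


definition ssum :: "nat \<Rightarrow> nat \<Rightarrow> letter list \<Rightarrow> nat" where
  "ssum a b u = sum_list (map (step_size a b) u)"

lemma ssum_simps[simp]: "ssum a b [] = 0" "ssum a b (s#u) = step_size a b s + ssum a b u"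
  "ssum a b (u@u') = ssum a b u + ssum a b u'"
  by (auto simp: ssum_def)

lemma length_psi[simp]: "length (psi n a b u p) = length u"
  by (induct u arbitrary: p) auto

lemma psi_append: "p < n \<Longrightarrow> psi n a b (u@u') p = psi n a b u p @ psi n a b u' ((p + ssum a b u) mod n)"
proof (induct u arbitrary: p)
  case Nil thus ?case by simp
next
  case (Cons s u)
  have "(p + step_size a b s) mod n < n" using Cons.prems by simp
  from Cons.hyps[OF this] show ?case by (simp add: mod_add_left_eq add.assoc)
qed

lemma is_path_Cons: "is_path n a b (e # c) \<longleftrightarrow> is_bond n a b e \<and> is_path n a b c \<and> (c \<noteq> [] \<longrightarrow> snd e = fst (hd c))"
proof
  assume H: "is_path n a b (e # c)"
  have A: "\<forall>x\<in>set (e#c). is_bond n a b x" and B: "\<And>j. Suc j < length (e#c) \<Longrightarrow> snd ((e#c) ! j) = fst ((e#c) ! Suc j)"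
    using H unfolding is_path_def by auto
  have "\<And>j. Suc j < length c \<Longrightarrow> snd (c ! j) = fst (c ! Suc j)"
  proof -
    fix j assume "Suc j < length c"
    hence "Suc (Suc j) < length (e#c)" by simp
    from B[OF this] show "snd (c ! j) = fst (c ! Suc j)" by simp
  qed
  hence "is_path n a b c" using A unfolding is_path_def by auto
  moreover have "c \<noteq> [] \<longrightarrow> snd e = fst (hd c)"
  proof
    assume "c \<noteq> []"
    hence "Suc 0 < length (e#c)" by simp
    from B[OF this] show "snd e = fst (hd c)" using \<open>c \<noteq> []\<close> by (simp add: hd_conv_nth)
  qed
  ultimately show "is_bond n a b e \<and> is_path n a b c \<and> (c \<noteq> [] \<longrightarrow> snd e = fst (hd c))" using A by simp
next
  assume H: "is_bond n a b e \<and> is_path n a b c \<and> (c \<noteq> [] \<longrightarrow> snd e = fst (hd c))"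
  have A: "\<forall>x\<in>set c. is_bond n a b x" and B: "\<And>j. Suc j < length c \<Longrightarrow> snd (c ! j) = fst (c ! Suc j)"
    using H unfolding is_path_def by auto
  have "snd ((e#c) ! j) = fst ((e#c) ! Suc j)" if j: "Suc j < length (e#c)" for j
  proof (cases j)
    case 0
    hence "c \<noteq> []" using j by auto
    thus ?thesis using H 0 by (simp add: hd_conv_nth)
  next
    case (Suc i)
    hence "Suc i < length c" using j by simp
    thus ?thesis using B Suc by simp
  qed
  thus "is_path n a b (e # c)" using A H unfolding is_path_def by auto
qed

lemma psi_Nil[simp]: "(psi n a b u p = []) = (u = [])"
  by (cases u) auto

lemma psi_hd: "psi n a b u p \<noteq> [] \<Longrightarrow> fst (hd (psi n a b u p)) = p"
  by (cases u) auto

lemma psi_path: "p < n \<Longrightarrow> is_path n a b (psi n a b u p)"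
proof (induct u arbitrary: p)
  case Nil thus ?case by (simp add: is_path_def)
next
  case (Cons s u)
  let ?q = "(p + step_size a b s) mod n"
  have q: "?q < n" using Cons.prems by simp
  have b1: "is_bond n a b (p, ?q)" using Cons.prems
    by (cases s) (auto simp: is_bond_def step_size_def)
  have p1: "is_path n a b (psi n a b u ?q)" using Cons.hyps[OF q] .
  have h1: "psi n a b u ?q \<noteq> [] \<longrightarrow> snd (p, ?q) = fst (hd (psi n a b u ?q))"
    using psi_hd[of n a b u ?q] by simp
  show ?case using b1 p1 h1 by (simp only: psi.simps is_path_Cons)
qed

lemma psi_last: "u \<noteq> [] \<Longrightarrow> p < n \<Longrightarrow> snd (last (psi n a b u p)) = (p + ssum a b u) mod n"
proof (induct u arbitrary: p)
  case Nil thus ?case by simp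
next
  case (Cons s u)
  show ?case
  proof (cases "u = []")
    case True thus ?thesis by simp
  next
    case False
    have "(p + step_size a b s) mod n < n" using Cons.prems by simp
    from Cons.hyps[OF False this] False show ?thesis by (simp add: mod_add_left_eq add.assoc)
  qed
qed

lemma step_inj: assumes "a < b" "b < n" "p < n" "(p + step_size a b s) mod n = (p + step_size a b s') mod n"
  shows "s = s'"
proof (rule ccontr)
  assume ne: "s \<noteq> s'"
  have "(p + a) mod n = (p + b) mod n" using assms(4) ne
    by (cases s; cases s') (auto simp: step_size_def)
  hence "a mod n = b mod n" by (simp add: nat_mod_eq_iff)
  thus False using assms by simp
qed

lemma psi_inj: "a < b \<Longrightarrow> b < n \<Longrightarrow> p < n \<Longrightarrow> p' < n \<Longrightarrow> u \<noteq> [] \<Longrightarrow>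
   psi n a b u p = psi n a b u' p' \<Longrightarrow> u = u' \<and> p = p'"
proof (induct u arbitrary: u' p p')
  case Nil thus ?case by simp
next
  case (Cons s u)
  obtain s' u'' where u': "u' = s' # u''" using Cons.prems(6) by (cases u') auto
  have pp: "p = p'" and st: "(p + step_size a b s) mod n = (p' + step_size a b s') mod n"
   and rest: "psi n a b u ((p + step_size a b s) mod n) = psi n a b u'' ((p' + step_size a b s') mod n)"
    using Cons.prems(6) u' by auto
  have ss: "s = s'" using step_inj[OF Cons.prems(1,2,3)] st pp by simp
  show ?case
  proof (cases "u = []")
    case True thus ?thesis using rest ss pp u' by (cases u'') auto
  next
    case False
    have "u = u''" using Cons.hyps[OF Cons.prems(1,2) _ _ False rest] Cons.prems(3,4) by simp
    thus ?thesis using ss pp u' by simp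
  qed
qed

lemma ssum_count: "ssum a b u = (length u - length (filter (\<lambda>x. x = LB) u)) * a + length (filter (\<lambda>x. x = LB) u) * b"
proof (induct u)
  case Nil thus ?case by simp
next
  case (Cons s u)
  have "length (filter (\<lambda>x. x = LB) u) \<le> length u" by simp
  with Cons show ?case by (cases s) (auto simp: step_size_def Suc_diff_le)
qed

lemma psi_rot: assumes "p < n" "(p + ssum a b w) mod n = p" "j < length w"
  shows "rotate j (psi n a b w p) = psi n a b (rotate j w) ((p + ssum a b (take j w)) mod n)"
proof -
  let ?q = "(p + ssum a b (take j w)) mod n"
  have n0: "n > 0" using assms by simp
  have e: "psi n a b w p = psi n a b (take j w) p @ psi n a b (drop j w) ?q"
    using psi_append[OF assms(1), where u = "take j w" and u' = "drop j w"] by simp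
  have "rotate j (psi n a b w p) = psi n a b (drop j w) ?q @ psi n a b (take j w) p"
    using assms(3) by (metis e length_psi rotate_append length_take min.absorb4 less_imp_le_nat)
  moreover have "(?q + ssum a b (drop j w)) mod n = p"
  proof -
    have sp: "ssum a b (take j w) + ssum a b (drop j w) = ssum a b w"
      by (metis ssum_simps(3) append_take_drop_id)
    have "(?q + ssum a b (drop j w)) mod n = (p + (ssum a b (take j w) + ssum a b (drop j w))) mod n"
      by (simp add: mod_add_left_eq add.assoc)
    hence "(?q + ssum a b (drop j w)) mod n = (p + ssum a b w) mod n" using sp by simp
    thus ?thesis using assms(2) by simp
  qed
  ultimately have "rotate j (psi n a b w p) = psi n a b (drop j w @ take j w) ?q"
    using psi_append[where p = ?q and u = "drop j w" and u' = "take j w"] n0 by simp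
  also have "drop j w @ take j w = rotate j w" using assms(3) by (simp add: rotate_drop_take)
  finally show ?thesis .
qed

lemma ssum_wpow: "ssum a b (wpow x j) = j * ssum a b x"
  by (induct j) (auto simp: wpow_def)

lemma take_wpow: "j \<le> r \<Longrightarrow> take (j * length x) (wpow x r) = wpow x j"
proof (induct j arbitrary: r)
  case 0 thus ?case by (simp add: wpow_def)
next
  case (Suc j)
  then obtain r' where "r = Suc r'" "j \<le> r'" by (cases r) auto
  with Suc show ?case by (simp add: wpow_Suc)
qed


lemma mod_fix: "(v::nat) < n \<Longrightarrow> ((v + m) mod n = v \<longleftrightarrow> n dvd m)"
  by (metis mod_less mod_eq_dvd_iff_nat add_diff_cancel_left' le_add1)

lemma arith_key: assumes "(n::nat) > 0" "r > 0" "r * D = W * n"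
  shows "n dvd j * D \<longleftrightarrow> (r div gcd r W) dvd j"
proof -
  have "n dvd j * D \<longleftrightarrow> n * r dvd j * D * r" using assms(2) nat_mult_dvd_cancel_disj by fastforce
  also have "j * D * r = (j * W) * n" using assms(3) by (simp add: mult.commute mult.left_commute)
  also have "n * r dvd (j * W) * n \<longleftrightarrow> r dvd j * W" using assms(1) by (simp add: mult.commute)
  also have "\<dots> \<longleftrightarrow> (r div gcd r W) dvd j"
  proof -
    define g where "g = gcd r W"
    define r' where "r' = r div g"
    define W' where "W' = W div g"
    have g0: "g > 0" using assms(2) g_def by simp
    have rw: "r = g * r'" "W = g * W'" unfolding r'_def W'_def g_def by simp_all
    have cop: "coprime r' W'" unfolding r'_def W'_def g_def
      using div_gcd_coprime[of r W] assms(2) by simp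
    have "r dvd j * W \<longleftrightarrow> g * r' dvd g * (j * W')" using rw by (simp add: mult.left_commute)
    also have "\<dots> \<longleftrightarrow> r' dvd j * W'" using g0 by simp
    also have "\<dots> \<longleftrightarrow> r' dvd j" using cop by (simp add: coprime_dvd_mult_left_iff)
    finally show ?thesis unfolding r'_def g_def .
  qed
  finally show ?thesis .
qed

lemma rep_bound: assumes "w \<noteq> []" "w = concat (replicate q y)" shows "q \<le> rep_num w"
proof -
  have B: "\<forall>r. (\<exists>x. w = concat (replicate r x)) \<longrightarrow> r \<le> length w"
  proof (intro allI impI)
    fix r assume "\<exists>x. w = concat (replicate r x)"
    then obtain x where x: "w = concat (replicate r x)" by blast
    hence lw: "length w = r * length x" by (simp add: length_concat sum_list_replicate)
    moreover have "x \<noteq> []" using x assms(1) by auto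
    ultimately have "r * 1 \<le> r * length x" by (intro mult_le_mono2) (simp add: Suc_leI)
    thus "r \<le> length w" using lw by simp
  qed
  show ?thesis unfolding rep_num_def
    using Greatest_le_nat[of "\<lambda>r. \<exists>x. w = concat (replicate r x)" q "length w"] B assms(2) by blast
qed

lemma word_rot: assumes "w = wpow x r" "r > 0" "x \<noteq> []" "\<And>q y. w = wpow y q \<Longrightarrow> q \<le> r"
  shows "rotate k w = w \<longleftrightarrow> length x dvd k"
proof
  let ?s = "length x"
  have rs: "rotate ?s w = w" using assms(1) by (simp add: rotate_wpow)
  assume rk: "rotate k w = w"
  define d where "d = gcd k ?s"
  have rd: "rotate d w = w" unfolding d_def using rotate_gcd_fix[OF rk rs] .
  have d0: "d > 0" using assms(3) d_def by simp
  have ds: "d dvd ?s" using d_def by simp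
  have lw: "length w = r * ?s" using assms(1) length_wpow by simp
  have dl: "d dvd length w" using ds lw by simp
  have "w = wpow (take d w) (length w div d)" using rot_pow[OF d0 dl rd] .
  hence le: "length w div d \<le> r" using assms(4) by blast
  obtain m where m: "?s = d * m" using ds by blast
  have "length w div d = r * m" using lw m d0 by simp
  hence "r * m \<le> r * 1" using le by simp
  hence "m \<le> 1" using assms(2) by simp
  hence "d = ?s" using m assms(3) by (cases m) auto
  thus "?s dvd k" using d_def by (metis gcd_dvd1)
next
  assume "length x dvd k"
  then obtain j where "k = length x * j" by blast
  thus "rotate k w = w" using rotate_mult_fix[of "length x" w j] assms(1) by (simp add: rotate_wpow)
qed

theorem mainTheorem12:
  fixes n a b l k r :: nat and \<omega> :: int and w x :: "letter list" and v :: nat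
  assumes "n \<ge> 2" and "0 < a" and "a < b" and "b < n"
    and "gcd n (gcd a b) = 1"
    and "l \<ge> 1" and "k \<le> l"
    and "int l * int a + int k * (int b - int a) = \<omega> * int n"
    and "w \<in> W2 l k"
    and "r = rep_num w" and "w = concat (replicate r x)"
    and "v < n"
  shows "(primitive_orbit n a b (phi n a b w v) \<longleftrightarrow> gcd (int r) \<omega> = 1)
    \<and> (\<forall>c t. is_circuit n a b c \<and> t > 0 \<and> phi n a b w v = orbit (cpow c t) \<longrightarrow>
          (primitive_orbit n a b (orbit c) \<longleftrightarrow> int t = gcd (int r) \<omega>))"
proof -
  have n0: "n > 0" using assms(1) by simp
  have lw: "length w = l" and cnt: "length (filter (\<lambda>x. x = LB) w) = k" using assms(9) by (auto simp: W2_def)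
  have wne: "w \<noteq> []" using lw assms(6) by auto
  have ww: "w = wpow x r" using assms(11) by (simp add: wpow_def)
  have r0: "r > 0" using ww wne by (cases r) (auto simp: wpow_def)
  have xne: "x \<noteq> []" using ww wne by (auto simp: wpow_def)
  define s where "s = length x"
  have s0: "s > 0" using xne s_def by simp
  have lrs: "l = r * s" using lw ww s_def by (simp add: length_wpow)
  have "ssum a b w = (l - k) * a + k * b" using ssum_count[of a b w] lw cnt by simp
  hence "int (ssum a b w) = int (l - k) * int a + int k * int b" by simp
  also have "int (l - k) = int l - int k" using assms(7) by (simp add: of_nat_diff)
  finally have "int (ssum a b w) = int l * int a + int k * (int b - int a)"
    by (simp add: algebra_simps)
  hence si: "int (ssum a b w) = \<omega> * int n" using assms(8) by simp
  hence om0: "\<omega> \<ge> 0" using n0 by (metis of_nat_0_le_iff of_nat_0_less_iff zero_le_mult_iff not_le)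
  define W where "W = nat \<omega>"
  have omW: "\<omega> = int W" using om0 W_def by simp
  have sw: "ssum a b w = W * n" using si omW by (metis of_nat_eq_iff of_nat_mult)
  define D where "D = ssum a b x"
  have rD: "r * D = W * n" using sw ww D_def by (simp add: ssum_wpow)
  have closed: "(v + ssum a b w) mod n = v" using sw assms(12) by simp
  define cc where "cc = psi n a b w v"
  have cc_circ: "is_circuit n a b cc" unfolding is_circuit_def cc_def
    using psi_path[OF assms(12)] wne psi_last[OF wne assms(12)] closed psi_hd[of n a b w v] by simp
  have lcc: "length cc = l" using cc_def lw by simp
  have repb: "\<And>q y. w = wpow y q \<Longrightarrow> q \<le> r"
    using rep_bound[OF wne] assms(10) by (simp add: wpow_def)
  have wrot: "\<And>k. rotate k w = w \<longleftrightarrow> s dvd k" using word_rot[OF ww r0 xne repb] s_def by simp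
  define g where "g = gcd r W"
  define r' where "r' = r div g"
  define e where "e = s * r'"
  have g0: "g > 0" using r0 g_def by simp
  have rr': "r = g * r'" using g_def r'_def by simp
  have keyl: "\<And>k. k < l \<Longrightarrow> rotate k cc = cc \<longleftrightarrow> e dvd k"
  proof -
    fix k assume kl: "k < l"
    let ?pk = "(v + ssum a b (take k w)) mod n"
    have pk: "?pk < n" using n0 by simp
    have rc: "rotate k cc = psi n a b (rotate k w) ?pk"
      unfolding cc_def using psi_rot[OF assms(12) closed] kl lw by simp
    have "rotate k cc = cc \<longleftrightarrow> rotate k w = w \<and> ?pk = v"
    proof
      assume "rotate k cc = cc"
      hence "psi n a b (rotate k w) ?pk = psi n a b w v" using rc cc_def by simp
      moreover have "rotate k w \<noteq> []" using wne by simp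
      ultimately show "rotate k w = w \<and> ?pk = v" using psi_inj[OF assms(3,4) pk assms(12)] by blast
    next
      assume h: "rotate k w = w \<and> ?pk = v"
      have "rotate k cc = psi n a b (rotate k w) ?pk" by (rule rc)
      also have "\<dots> = psi n a b w v" using h by simp
      finally show "rotate k cc = cc" unfolding cc_def .
    qed
    also have "\<dots> \<longleftrightarrow> e dvd k"
    proof
      assume h: "rotate k w = w \<and> ?pk = v"
      then obtain j where kj: "k = j * s" using wrot by (metis dvd_def mult.commute)
      have jr: "j \<le> r" using kj kl lrs s0 by simp
      have "take k w = wpow x j" using take_wpow[OF jr, of x] kj ww s_def by simp
      hence "?pk = (v + j * D) mod n" using D_def by (simp add: ssum_wpow)
      hence "(v + j * D) mod n = v" using h by simp
      hence "n dvd j * D" using mod_fix[OF assms(12)] by blast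
      hence "r' dvd j" using arith_key[OF n0 r0 rD] g_def r'_def by simp
      thus "e dvd k" using kj e_def by simp
    next
      assume "e dvd k"
      then obtain j where kj: "k = j * s" and rj: "r' dvd j" using e_def
        by (metis dvd_def mult.commute mult.left_commute)
      have jr: "j \<le> r" using kj kl lrs s0 by simp
      have "take k w = wpow x j" using take_wpow[OF jr, of x] kj ww s_def by simp
      hence "?pk = (v + j * D) mod n" using D_def by (simp add: ssum_wpow)
      moreover have "n dvd j * D" using arith_key[OF n0 r0 rD] g_def r'_def rj by simp
      ultimately have "?pk = v" using mod_fix[OF assms(12)] by simp
      moreover have "rotate k w = w" using wrot kj by simp
      ultimately show "rotate k w = w \<and> ?pk = v" by simp
    qed
    finally show "rotate k cc = cc \<longleftrightarrow> e dvd k" .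
  qed
  have el: "e dvd l" using lrs rr' e_def by simp
  have e0: "e > 0" using e_def s0 rr' r0 r'_def by (metis gr0I mult_is_0 not_less0)
  have key: "\<And>k. rotate k cc = cc \<longleftrightarrow> e dvd k"
  proof -
    fix k
    have "rotate k cc = rotate (k mod l) cc" using lcc by (metis rotate_conv_mod)
    moreover have "k mod l < l" using assms(6) by simp
    moreover have "e dvd k \<longleftrightarrow> e dvd k mod l" using el by (simp add: dvd_mod_iff)
    ultimately show "rotate k cc = cc \<longleftrightarrow> e dvd k" using keyl by simp
  qed
  have gi: "gcd (int r) \<omega> = int g" using omW g_def by (simp add: gcd_int_def)
  have part1: "primitive_orbit n a b (phi n a b w v) \<longleftrightarrow> gcd (int r) \<omega> = 1"
  proof -
    have "primitive_orbit n a b (phi n a b w v) \<longleftrightarrow> (\<forall>k. 0<k \<and> k<l \<longrightarrow> \<not> e dvd k)"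
      using prim_iff[OF cc_circ] lcc key unfolding phi_def cc_def by simp
    also have "\<dots> \<longleftrightarrow> e = l"
    proof
      assume "\<forall>k. 0<k \<and> k<l \<longrightarrow> \<not> e dvd k"
      moreover have "e \<le> l" using el assms(6) by (simp add: dvd_imp_le)
      ultimately show "e = l" using e0 by (metis dvd_refl le_neq_implies_less)
    next
      assume "e = l" thus "\<forall>k. 0<k \<and> k<l \<longrightarrow> \<not> e dvd k" by (auto dest: dvd_imp_le)
    qed
    also have "\<dots> \<longleftrightarrow> g = 1" using lrs e_def rr' s0 r0 g0 by auto
    finally show ?thesis using gi by simp
  qed
  have part2: "\<forall>c t. is_circuit n a b c \<and> t > 0 \<and> phi n a b w v = orbit (cpow c t) \<longrightarrow>
          (primitive_orbit n a b (orbit c) \<longleftrightarrow> int t = gcd (int r) \<omega>)"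
  proof (intro allI impI)
    fix c t assume h: "is_circuit n a b c \<and> t > 0 \<and> phi n a b w v = orbit (cpow c t)"
    hence t0: "t > 0" and cc0: "is_circuit n a b c" by auto
    obtain j where cj: "cc = rotate j (wpow c t)" using h in_orbit_eq[of cc "cpow c t"]
      unfolding phi_def cc_def by (auto simp: cpow_eq)
    have ckey: "\<And>k. rotate k c = c \<longleftrightarrow> e dvd k"
      using key cj rotate_fix_rot rotate_wpow_fix[OF t0] by metis
    define L where "L = length c"
    have L0: "L > 0" using cc0 L_def by (simp add: is_circuit_def)
    have ltL: "l = t * L" using lcc cj L_def by (simp add: length_wpow)
    have eL: "e dvd L" using ckey[of L] L_def by simp
    have "primitive_orbit n a b (orbit c) \<longleftrightarrow> (\<forall>k. 0<k \<and> k<L \<longrightarrow> \<not> e dvd k)"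
      using prim_iff[OF cc0] ckey L_def by simp
    also have "\<dots> \<longleftrightarrow> e = L"
    proof
      assume "\<forall>k. 0<k \<and> k<L \<longrightarrow> \<not> e dvd k"
      moreover have "e \<le> L" using eL L0 by (simp add: dvd_imp_le)
      ultimately show "e = L" using e0 by (metis dvd_refl le_neq_implies_less)
    next
      assume "e = L" thus "\<forall>k. 0<k \<and> k<L \<longrightarrow> \<not> e dvd k" by (auto dest: dvd_imp_le)
    qed
    also have "\<dots> \<longleftrightarrow> t = g"
    proof -
      have eq: "g * e = t * L" using ltL lrs rr' e_def by (simp add: mult.commute mult.left_commute)
      show ?thesis
      proof
        assume "e = L" thus "t = g" using eq L0 by simp
      next
        assume "t = g" thus "e = L" using eq g0 by simp
      qed
    qed
    finally show "primitive_orbit n a b (orbit c) \<longleftrightarrow> int t = gcd (int r) \<omega>" using gi by simp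
  qed
  show ?thesis using part1 part2 by blast
qed
end
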